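(* Let $\mathbf{\Pi}=\langle\mathit{PF},\Pi\rangle$ be a multi-valued probabilistic program such that $\mathrm{SM}''[\mathbf{\Pi}]$ is not empty and $M_{\mathbf{\Pi}}(c=v)>0$ for every probabilistic constant $c$ and every $v\in\mathrm{Dom}(c)$. Then for every interpretation $I$, $I$ is a (probabilistic) stable model of $T(\mathbf{\Pi})$ if and only if $I\in\mathrm{SM}''[\mathbf{\Pi}]$.
   Context: Stable model semantics: a rule is $A\leftarrow B\wedge N$ ($A$ a possibly empty disjunction of atoms, $B$ a conjunction of atoms, $N$ a formula with every atom occurrence under negation); the reduct $\Pi^I$ of a ground program keeps $A\leftarrow B$ for rules with $I\models N$; $I$ (a set of atoms) is a stable model if it is a minimal model of $\Pi^I$. An $\mathrm{LP}^{\mathrm{MLN}}$ program $\Pi$ is a finite set of weighted rules $w:R$, $w$ real or the symbol $\alpha$; $\Pi_I=\{w:R\in\Pi\mid I\models R\}$; $\mathrm{SM}[\Pi]=\{I\mid I$ stable model of the unweighted $\Pi_I\}$; with $\alpha$ a real parameter, $W_\Pi(I)=\exp(\sum_{w:R\in\Pi_I}w)$ if $I\in\mathrm{SM}[\Pi]$, else $0$; $P_\Pi(I)=\lim_{\alpha\to\infty}W_\Pi(I)/\sum_{J\in\mathrm{SM}[\Pi]}W_\Pi(J)$; $I$ is a (probabilistic) stable model of $\Pi$ if $P_\Pi(I)\neq0$. Multi-valued signature: constants $c$ with finite domains $\mathrm{Dom}(c)$; atoms $c=v$; constants are probabilistic or regular. A multi-valued probabilistic program $\mathbf{\Pi}=\langle\mathit{PF},\Pi\rangle$: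 $\mathit{PF}$ has, for each probabilistic constant $c$, one declaration $p_1:c=v_1\mid\dots\mid p_n:c=v_n$ ($\{v_i\}=\mathrm{Dom}(c)$ distinct, $p_i\in[0,1]$, $\sum p_i=1$), and $M_{\mathbf{\Pi}}(c=v_i)=p_i$; $\Pi$ is a set of rules whose heads contain no atom of a probabilistic constant. $T(\mathbf{\Pi})$ is the $\mathrm{LP}^{\mathrm{MLN}}$ program containing: $\ln(p_i):c=v_i$ if $0<p_i<1$, $\alpha:c=v_i$ if $p_i=1$, $\alpha:\bot\leftarrow c=v_i$ if $p_i=0$; $\alpha:R$ for $R\in\Pi$; $\alpha:\bot\leftarrow c=v_1\wedge c=v_2$ for every constant $c$ and distinct $v_1,v_2\in\mathrm{Dom}(c)$; $\alpha:\bot\leftarrow\neg\bigvee_{v\in\mathrm{Dom}(c)}c=v$ for every probabilistic $c$. $I$ is consistent if it satisfies the last two kinds of constraints; $\mathit{TC}(I)=\{c=v\in I\mid c$ probabilistic$\}$; $\mathrm{SM}''[\mathbf{\Pi}]$ is the set of consistent $I$ that are stable models of $\Pi\cup\mathit{TC}(I)$. *)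

theory Defs
  imports Complex_Main
begin

datatype 'a fm = Atom 'a | Top | Bot | Neg "'a fm" | Conj "'a fm" "'a fm"
  | Disj "'a fm" "'a fm" | Imp "'a fm" "'a fm"

fun fsat :: "'a set \<Rightarrow> 'a fm \<Rightarrow> bool" where
  "fsat I (Atom a) = (a \<in> I)"
| "fsat I Top = True"
| "fsat I Bot = False"
| "fsat I (Neg f) = (\<not> fsat I f)"
| "fsat I (Conj f g) = (fsat I f \<and> fsat I g)"
| "fsat I (Disj f g) = (fsat I f \<or> fsat I g)"
| "fsat I (Imp f g) = (fsat I f \<longrightarrow> fsat I g)"

fun neg_guarded :: "'a fm \<Rightarrow> bool" where
  "neg_guarded (Atom a) = False"
| "neg_guarded Top = True"
| "neg_guarded Bot = True"
| "neg_guarded (Neg f) = True"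
| "neg_guarded (Conj f g) = (neg_guarded f \<and> neg_guarded g)"
| "neg_guarded (Disj f g) = (neg_guarded f \<and> neg_guarded g)"
| "neg_guarded (Imp f g) = (neg_guarded f \<and> neg_guarded g)"

fun disj_list :: "'a fm list \<Rightarrow> 'a fm" where
  "disj_list [] = Bot"
| "disj_list (f # fs) = Disj f (disj_list fs)"

text \<open>A rule  A \<leftarrow> B \<and> N : head A (disjunction of the atoms in the set),
  positive body B (conjunction of the atoms in the set), negative part N.\<close>
datatype 'a rule = Rule (head: "'a set") (pbody: "'a set") (nbody: "'a fm")

definition wf_rule :: "'a rule \<Rightarrow> bool" where
  "wf_rule R \<longleftrightarrow> finite (head R) \<and> finite (pbody R) \<and> neg_guarded (nbody R)"

definition rsat :: "'a set \<Rightarrow> 'a rule \<Rightarrow> bool" where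
  "rsat I R \<longleftrightarrow> (pbody R \<subseteq> I \<and> fsat I (nbody R) \<longrightarrow> head R \<inter> I \<noteq> {})"

text \<open>Reduct: positive rules (A, B) standing for A \<leftarrow> B.\<close>
definition reduct :: "'a rule set \<Rightarrow> 'a set \<Rightarrow> ('a set \<times> 'a set) set" where
  "reduct P I = {(head R, pbody R) | R. R \<in> P \<and> fsat I (nbody R)}"

definition pmodel :: "('a set \<times> 'a set) set \<Rightarrow> 'a set \<Rightarrow> bool" where
  "pmodel Q J \<longleftrightarrow> (\<forall>(A, B) \<in> Q. B \<subseteq> J \<longrightarrow> A \<inter> J \<noteq> {})"

definition minimal_model :: "('a set \<times> 'a set) set \<Rightarrow> 'a set \<Rightarrow> bool" where
  "minimal_model Q I \<longleftrightarrow> pmodel Q I \<and> (\<forall>J. J \<subset> I \<longrightarrow> \<not> pmodel Q J)"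

definition stable_model :: "'a rule set \<Rightarrow> 'a set \<Rightarrow> bool" where
  "stable_model P I \<longleftrightarrow> minimal_model (reduct P I) I"

datatype weight = W real | Alpha

fun wval :: "real \<Rightarrow> weight \<Rightarrow> real" where
  "wval a (W r) = r"
| "wval a Alpha = a"

definition lpmln_program :: "(weight \<times> 'a rule) set \<Rightarrow> bool" where
  "lpmln_program P \<longleftrightarrow> finite P \<and> (\<forall>(w, R) \<in> P. wf_rule R)"

definition sat_part :: "(weight \<times> 'a rule) set \<Rightarrow> 'a set \<Rightarrow> (weight \<times> 'a rule) set" where
  "sat_part P I = {(w, R) \<in> P. rsat I R}"

definition SM :: "(weight \<times> 'a rule) set \<Rightarrow> 'a set set" where
  "SM P = {I. stable_model (snd ` sat_part P I) I}"

text \<open>Unnormalised weight, with \<alpha> instantiated by the real parameter a.\<close>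
definition Wt :: "(weight \<times> 'a rule) set \<Rightarrow> real \<Rightarrow> 'a set \<Rightarrow> real" where
  "Wt P a I = (if I \<in> SM P then exp (\<Sum>(w, R) \<in> sat_part P I. wval a w) else 0)"

definition Prob :: "(weight \<times> 'a rule) set \<Rightarrow> 'a set \<Rightarrow> real" where
  "Prob P I = Lim at_top (\<lambda>a. Wt P a I / (\<Sum>J \<in> SM P. Wt P a J))"

definition prob_stable_model :: "(weight \<times> 'a rule) set \<Rightarrow> 'a set \<Rightarrow> bool" where
  "prob_stable_model P I \<longleftrightarrow> Prob P I \<noteq> 0"

text \<open>Signature: constants Cs, probabilistic ones Pc \<subseteq> Cs, domains Dom.
  Atom c = v is the pair (c, v).  The declarations PF are given by pr:
  the declaration for probabilistic c is  pr c v1 : c = v1 | ... | pr c vn : c = vn.\<close>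

definition sig_atoms :: "'c set \<Rightarrow> ('c \<Rightarrow> 'v set) \<Rightarrow> ('c \<times> 'v) set" where
  "sig_atoms Cs Dom = {(c, v). c \<in> Cs \<and> v \<in> Dom c}"

fun fm_atoms :: "'a fm \<Rightarrow> 'a set" where
  "fm_atoms (Atom a) = {a}"
| "fm_atoms Top = {}"
| "fm_atoms Bot = {}"
| "fm_atoms (Neg f) = fm_atoms f"
| "fm_atoms (Conj f g) = fm_atoms f \<union> fm_atoms g"
| "fm_atoms (Disj f g) = fm_atoms f \<union> fm_atoms g"
| "fm_atoms (Imp f g) = fm_atoms f \<union> fm_atoms g"

definition rule_atoms :: "'a rule \<Rightarrow> 'a set" where
  "rule_atoms R = head R \<union> pbody R \<union> fm_atoms (nbody R)"

definition mv_prob_program ::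
  "'c set \<Rightarrow> 'c set \<Rightarrow> ('c \<Rightarrow> 'v set) \<Rightarrow> ('c \<Rightarrow> 'v \<Rightarrow> real) \<Rightarrow> ('c \<times> 'v) rule set \<Rightarrow> bool" where
  "mv_prob_program Cs Pc Dom pr Pi \<longleftrightarrow>
     finite Cs \<and> Pc \<subseteq> Cs \<and> (\<forall>c \<in> Cs. finite (Dom c)) \<and>
     (\<forall>c \<in> Pc. (\<forall>v \<in> Dom c. 0 \<le> pr c v \<and> pr c v \<le> 1) \<and> (\<Sum>v \<in> Dom c. pr c v) = 1) \<and>
     finite Pi \<and>
     (\<forall>R \<in> Pi. wf_rule R \<and> rule_atoms R \<subseteq> sig_atoms Cs Dom \<and>
                (\<forall>(c, v) \<in> head R. c \<notin> Pc))"

definition fact :: "'a \<Rightarrow> 'a rule" where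
  "fact a = Rule {a} {} Top"

definition constraint :: "'a set \<Rightarrow> 'a fm \<Rightarrow> 'a rule" where
  "constraint B N = Rule {} B N"

definition dom_list :: "('c \<Rightarrow> 'v set) \<Rightarrow> 'c \<Rightarrow> 'v list" where
  "dom_list Dom c = (SOME vs. set vs = Dom c \<and> distinct vs)"

definition uniq_constraints :: "'c set \<Rightarrow> ('c \<Rightarrow> 'v set) \<Rightarrow> ('c \<times> 'v) rule set" where
  "uniq_constraints Cs Dom =
     {constraint {(c, v1), (c, v2)} Top | c v1 v2. c \<in> Cs \<and> v1 \<in> Dom c \<and> v2 \<in> Dom c \<and> v1 \<noteq> v2}"

definition exist_constraints :: "'c set \<Rightarrow> ('c \<Rightarrow> 'v set) \<Rightarrow> ('c \<times> 'v) rule set" where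
  "exist_constraints Pc Dom =
     {constraint {} (Neg (disj_list (map (\<lambda>v. Atom (c, v)) (dom_list Dom c)))) | c. c \<in> Pc}"

definition T_trans ::
  "'c set \<Rightarrow> 'c set \<Rightarrow> ('c \<Rightarrow> 'v set) \<Rightarrow> ('c \<Rightarrow> 'v \<Rightarrow> real) \<Rightarrow> ('c \<times> 'v) rule set
   \<Rightarrow> (weight \<times> ('c \<times> 'v) rule) set" where
  "T_trans Cs Pc Dom pr Pi =
     {(W (ln (pr c v)), fact (c, v)) | c v. c \<in> Pc \<and> v \<in> Dom c \<and> 0 < pr c v \<and> pr c v < 1}
   \<union> {(Alpha, fact (c, v)) | c v. c \<in> Pc \<and> v \<in> Dom c \<and> pr c v = 1}
   \<union> {(Alpha, constraint {(c, v)} Top) | c v. c \<in> Pc \<and> v \<in> Dom c \<and> pr c v = 0}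
   \<union> {(Alpha, R) | R. R \<in> Pi}
   \<union> {(Alpha, R) | R. R \<in> uniq_constraints Cs Dom}
   \<union> {(Alpha, R) | R. R \<in> exist_constraints Pc Dom}"

definition consistent :: "'c set \<Rightarrow> 'c set \<Rightarrow> ('c \<Rightarrow> 'v set) \<Rightarrow> ('c \<times> 'v) set \<Rightarrow> bool" where
  "consistent Cs Pc Dom I \<longleftrightarrow>
     (\<forall>R \<in> uniq_constraints Cs Dom \<union> exist_constraints Pc Dom. rsat I R)"

definition TC :: "'c set \<Rightarrow> ('c \<times> 'v) set \<Rightarrow> ('c \<times> 'v) set" where
  "TC Pc I = {(c, v) \<in> I. c \<in> Pc}"

definition SM2 :: "'c set \<Rightarrow> 'c set \<Rightarrow> ('c \<Rightarrow> 'v set) \<Rightarrow> ('c \<times> 'v) rule set \<Rightarrow> ('c \<times> 'v) set set" where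
  "SM2 Cs Pc Dom Pi = {I. consistent Cs Pc Dom I \<and> stable_model (Pi \<union> fact ` TC Pc I) I}"

end

theory Submission
  imports Defs
begin

lemma exp_lim_neg:
  fixes d e :: real
  assumes d: "d < 0"
  shows "((\<lambda>a. exp (a * d + e)) \<longlongrightarrow> 0) at_top"
proof -
  have "filterlim (\<lambda>a. a * d) at_bot at_top"
    using filterlim_tendsto_neg_mult_at_bot[OF tendsto_const[of d] _ filterlim_ident] d
    by (simp add: mult.commute)
  then have "filterlim (\<lambda>a. e + a * d) at_bot at_top"
    using filterlim_tendsto_add_at_bot_iff[OF tendsto_const[of e], of "\<lambda>a. a * d" at_top] by simp
  then have "filterlim (\<lambda>a. a * d + e) at_bot at_top" by (simp add: add.commute)
  then show ?thesis
    by (rule filterlim_compose[OF exp_at_bot])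
qed

lemma lim_lemma:
  fixes k c :: "'a \<Rightarrow> real"
  assumes S: "finite S" and J0: "J0 \<in> S" "k J0 = K" and le: "\<forall>J\<in>S. k J \<le> K" and I: "I \<in> S"
  shows "((\<lambda>a. exp (a * k I + c I) / (\<Sum>J\<in>S. exp (a * k J + c J))) \<longlongrightarrow>
     (if k I = K then exp (c I) else 0) / (\<Sum>J\<in>S. if k J = K then exp (c J) else 0)) at_top"
proof -
  define f where "f J = (if k J = K then exp (c J) else 0)" for J
  have lim: "((\<lambda>a. exp (a * (k J - K) + c J)) \<longlongrightarrow> f J) at_top" if "J \<in> S" for J
  proof (cases "k J = K")
    case True then show ?thesis by (simp add: f_def)
  next
    case False
    then have "k J - K < 0" using le that by force
    then show ?thesis using exp_lim_neg False by (simp add: f_def)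
  qed
  have "f J0 \<le> (\<Sum>J\<in>S. f J)"
    by (rule member_le_sum) (use J0 S in \<open>auto simp: f_def\<close>)
  moreover have "f J0 > 0" using J0 by (simp add: f_def)
  ultimately have D: "(\<Sum>J\<in>S. f J) \<noteq> 0" by linarith
  have eq: "exp (a * k I + c I) / (\<Sum>J\<in>S. exp (a * k J + c J)) =
     exp (a * (k I - K) + c I) / (\<Sum>J\<in>S. exp (a * (k J - K) + c J))" for a
  proof -
    have e: "exp (a * k J + c J) = exp (a * K) * exp (a * (k J - K) + c J)" for J
      by (simp add: exp_add[symmetric] algebra_simps)
    show ?thesis unfolding e sum_distrib_left[symmetric] by simp
  qed
  have "((\<lambda>a. exp (a * (k I - K) + c I) / (\<Sum>J\<in>S. exp (a * (k J - K) + c J))) \<longlongrightarrow>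
     f I / (\<Sum>J\<in>S. f J)) at_top"
    by (rule tendsto_divide[OF lim[OF I] tendsto_sum[OF lim] D])
  then show ?thesis unfolding eq f_def .
qed

definition kf :: "(weight \<times> 'a rule) set \<Rightarrow> 'a set \<Rightarrow> real" where
  "kf P I = (\<Sum>x\<in>sat_part P I. if fst x = Alpha then 1 else 0)"

definition cf :: "(weight \<times> 'a rule) set \<Rightarrow> 'a set \<Rightarrow> real" where
  "cf P I = (\<Sum>x\<in>sat_part P I. wval 0 (fst x))"

lemma wval_split: "wval a w = a * (if w = Alpha then 1 else 0) + wval 0 w"
  by (cases w) auto

lemma Wt_eq: "I \<in> SM P \<Longrightarrow> Wt P a I = exp (a * kf P I + cf P I)"
proof -
  assume "I \<in> SM P"
  have "(\<Sum>(w, R) \<in> sat_part P I. wval a w) = (\<Sum>x\<in>sat_part P I. wval a (fst x))"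
    by (simp add: case_prod_beta)
  also have "\<dots> = a * kf P I + cf P I"
    unfolding kf_def cf_def sum_distrib_left
    by (subst wval_split) (simp add: sum.distrib)
  finally show ?thesis using \<open>I \<in> SM P\<close> by (simp add: Wt_def)
qed

lemma Prob_char:
  assumes fin: "finite (SM P)" and J0: "J0 \<in> SM P" "kf P J0 = K"
    and le: "\<forall>J\<in>SM P. kf P J \<le> K"
  shows "Prob P I \<noteq> 0 \<longleftrightarrow> I \<in> SM P \<and> kf P I = K"
proof (cases "I \<in> SM P")
  case False
  then have "Prob P I = Lim at_top (\<lambda>a::real. 0::real)" by (simp add: Prob_def Wt_def)
  also have "\<dots> = 0" by (rule tendsto_Lim) auto
  finally show ?thesis using False by simp
next
  case True
  define D where "D = (\<Sum>J\<in>SM P. if kf P J = K then exp (cf P J) else 0)"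
  have "f J0 \<le> (\<Sum>J\<in>SM P. f J)" if "\<And>J. f J \<ge> 0" for f :: "'a set \<Rightarrow> real"
    by (rule member_le_sum) (use J0 fin that in auto)
  from this[of "\<lambda>J. if kf P J = K then exp (cf P J) else 0"] J0
  have Dpos: "D > 0" unfolding D_def by (smt (verit) exp_gt_zero)
  have lim: "((\<lambda>a. Wt P a I / (\<Sum>J\<in>SM P. Wt P a J)) \<longlongrightarrow>
      (if kf P I = K then exp (cf P I) else 0) / D) at_top"
  proof -
    have "(\<lambda>a. Wt P a I / (\<Sum>J\<in>SM P. Wt P a J)) =
          (\<lambda>a. exp (a * kf P I + cf P I) / (\<Sum>J\<in>SM P. exp (a * kf P J + cf P J)))"
      using True by (simp add: Wt_eq)
    then show ?thesis unfolding D_def using lim_lemma[OF fin J0 le True] by simp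
  qed
  have "Prob P I = (if kf P I = K then exp (cf P I) else 0) / D"
    unfolding Prob_def by (rule tendsto_Lim[OF _ lim]) simp
  then show ?thesis using True Dpos by simp
qed


lemma fsat_disj_list: "fsat I (disj_list (map (\<lambda>v. Atom (c, v)) vs)) \<longleftrightarrow> (\<exists>v\<in>set vs. (c, v) \<in> I)"
  by (induction vs) auto

lemma fm_atoms_disj_list: "fm_atoms (disj_list (map (\<lambda>v. Atom (c, v)) vs)) = (\<lambda>v. (c, v)) ` set vs"
  by (induction vs) auto

lemma dom_list_set: "finite (Dom c) \<Longrightarrow> set (dom_list Dom c) = Dom c"
  unfolding dom_list_def by (metis (mono_tags, lifting) finite_distinct_list someI_ex)

lemma rsat_fact[simp]: "rsat I (fact a) \<longleftrightarrow> a \<in> I"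
  by (simp add: rsat_def fact_def)

lemma rsat_constraint[simp]: "rsat I (constraint B N) \<longleftrightarrow> \<not> (B \<subseteq> I \<and> fsat I N)"
  by (simp add: rsat_def constraint_def)

lemma reduct_Un: "reduct (A \<union> B) I = reduct A I \<union> reduct B I"
  unfolding reduct_def by blast

lemma stable_rsat: "stable_model P I \<Longrightarrow> R \<in> P \<Longrightarrow> rsat I R"
proof -
  assume s: "stable_model P I" and R: "R \<in> P"
  show "rsat I R" unfolding rsat_def
  proof
    assume a: "pbody R \<subseteq> I \<and> fsat I (nbody R)"
    then have "(head R, pbody R) \<in> reduct P I" using R unfolding reduct_def by blast
    then show "head R \<inter> I \<noteq> {}" using s a unfolding stable_model_def minimal_model_def pmodel_def by auto
  qed
qed

lemma minimal_model_Un_constr: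
  assumes C: "\<forall>(A, B)\<in>C. A = {} \<and> \<not> B \<subseteq> I"
  shows "minimal_model (Q \<union> C) I \<longleftrightarrow> minimal_model Q I"
proof -
  have "pmodel (Q \<union> C) J \<longleftrightarrow> pmodel Q J" if J: "J \<subseteq> I" for J
  proof
    assume "pmodel (Q \<union> C) J" then show "pmodel Q J" unfolding pmodel_def by auto
  next
    assume q: "pmodel Q J"
    show "pmodel (Q \<union> C) J" unfolding pmodel_def
    proof (intro ballI, clarify)
      fix A B x assume "(A, B) \<in> Q \<union> C" "B \<subseteq> J" "A \<inter> J = {}"
      moreover have "(A, B) \<in> C \<Longrightarrow> \<not> B \<subseteq> I" using C by auto
      ultimately show False using q J unfolding pmodel_def by auto
    qed
  qed
  then show ?thesis unfolding minimal_model_def by (meson psubset_imp_subset order_refl)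
qed

lemma minimal_model_heads: "minimal_model Q I \<Longrightarrow> I \<subseteq> \<Union>(fst ` Q)"
proof (rule ccontr)
  assume m: "minimal_model Q I" and n: "\<not> I \<subseteq> \<Union>(fst ` Q)"
  let ?J = "I \<inter> \<Union>(fst ` Q)"
  have "?J \<subset> I" using n by blast
  moreover have "pmodel Q ?J"
    unfolding pmodel_def
  proof (intro ballI, clarify)
    fix A B assume AB: "(A, B) \<in> Q" "B \<subseteq> ?J" "A \<inter> ?J = {}"
    have "A \<inter> I \<noteq> {}" using m AB(1,2) unfolding minimal_model_def pmodel_def by auto
    moreover have "A \<subseteq> \<Union>(fst ` Q)" using AB(1) by force
    ultimately show False using AB(3) by blast
  qed
  ultimately show False using m unfolding minimal_model_def by blast
qed

lemma fsat_restrict: "fm_atoms N \<subseteq> X \<Longrightarrow> fsat (I \<inter> X) N = fsat I N"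
  by (induction N) auto

lemma rsat_restrict: "rule_atoms R \<subseteq> X \<Longrightarrow> rsat (I \<inter> X) R = rsat I R"
  proof -
  assume a: "rule_atoms R \<subseteq> X"
  then have "fsat (I \<inter> X) (nbody R) = fsat I (nbody R)" by (intro fsat_restrict) (auto simp: rule_atoms_def)
  moreover have "pbody R \<subseteq> I \<inter> X \<longleftrightarrow> pbody R \<subseteq> I" using a by (auto simp: rule_atoms_def)
  moreover have "head R \<inter> (I \<inter> X) = head R \<inter> I" using a by (auto simp: rule_atoms_def)
  ultimately show ?thesis unfolding rsat_def by simp
qed

lemma sig_finite: "mv_prob_program Cs Pc Dom pr Pi \<Longrightarrow> finite (sig_atoms Cs Dom)"
proof -
  assume "mv_prob_program Cs Pc Dom pr Pi"
  then have "finite (Sigma Cs Dom)" unfolding mv_prob_program_def by auto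
  moreover have "sig_atoms Cs Dom = Sigma Cs Dom" unfolding sig_atoms_def by auto
  ultimately show ?thesis by simp
qed


lemma T_cases:
  assumes "(w, R) \<in> T_trans Cs Pc Dom pr Pi"
  obtains (f) c v where "c \<in> Pc" "v \<in> Dom c" "R = fact (c, v)" "w = Alpha \<longrightarrow> pr c v = 1"
  | (z) c v where "c \<in> Pc" "v \<in> Dom c" "pr c v = 0" "R = constraint {(c, v)} Top" "w = Alpha"
  | (p) "R \<in> Pi" "w = Alpha"
  | (u) "R \<in> uniq_constraints Cs Dom" "w = Alpha"
  | (e) "R \<in> exist_constraints Pc Dom" "w = Alpha"
  using assms unfolding T_trans_def by auto

lemma constr_head: "R \<in> uniq_constraints Cs Dom \<union> exist_constraints Pc Dom \<Longrightarrow> head R = {}"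
  unfolding uniq_constraints_def exist_constraints_def constraint_def by auto

lemma constr_atoms:
  assumes mv: "mv_prob_program Cs Pc Dom pr Pi"
    and R: "R \<in> uniq_constraints Cs Dom \<union> exist_constraints Pc Dom"
  shows "rule_atoms R \<subseteq> sig_atoms Cs Dom"
  using R
proof
  assume "R \<in> uniq_constraints Cs Dom"
  then show ?thesis unfolding uniq_constraints_def constraint_def rule_atoms_def sig_atoms_def by auto
next
  assume "R \<in> exist_constraints Pc Dom"
  then obtain c where c: "c \<in> Pc" and R: "R = constraint {} (Neg (disj_list (map (\<lambda>v. Atom (c, v)) (dom_list Dom c))))"
    unfolding exist_constraints_def by auto
  have "set (dom_list Dom c) = Dom c" using mv c by (intro dom_list_set) (auto simp: mv_prob_program_def)
  then show ?thesis using c mv unfolding R constraint_def rule_atoms_def sig_atoms_def mv_prob_program_def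
    by (auto simp: fm_atoms_disj_list)
qed

lemma T_heads:
  assumes mv: "mv_prob_program Cs Pc Dom pr Pi" and wR: "(w, R) \<in> T_trans Cs Pc Dom pr Pi"
  shows "head R \<subseteq> sig_atoms Cs Dom"
  using wR
proof (cases rule: T_cases)
  case (f c v) then show ?thesis using mv by (auto simp: fact_def sig_atoms_def mv_prob_program_def)
next
  case (z c v) then show ?thesis by (simp add: constraint_def)
next
  case p then show ?thesis using mv by (auto simp: mv_prob_program_def rule_atoms_def)
next
  case u then show ?thesis using constr_head by blast
next
  case e then show ?thesis using constr_head by blast
qed

lemma SM_sub:
  assumes mv: "mv_prob_program Cs Pc Dom pr Pi" and I: "I \<in> SM (T_trans Cs Pc Dom pr Pi)"
  shows "I \<subseteq> sig_atoms Cs Dom"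
proof -
  let ?T = "T_trans Cs Pc Dom pr Pi"
  have "I \<subseteq> \<Union>(fst ` reduct (snd ` sat_part ?T I) I)"
    using I minimal_model_heads unfolding SM_def stable_model_def by blast
  also have "\<dots> \<subseteq> sig_atoms Cs Dom"
  proof
    fix x assume "x \<in> \<Union>(fst ` reduct (snd ` sat_part ?T I) I)"
    then obtain R where "R \<in> snd ` sat_part ?T I" "x \<in> head R" unfolding reduct_def by auto
    then obtain w where "(w, R) \<in> ?T" "x \<in> head R" unfolding sat_part_def by auto
    then show "x \<in> sig_atoms Cs Dom" using T_heads[OF mv] by blast
  qed
  finally show ?thesis .
qed

lemma T_finite:
  assumes mv: "mv_prob_program Cs Pc Dom pr Pi"
  shows "finite (T_trans Cs Pc Dom pr Pi)"
proof -
  let ?S = "sig_atoms Cs Dom"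
  have fS: "finite ?S" using sig_finite[OF mv] .
  have fPc: "finite Pc" using mv finite_subset unfolding mv_prob_program_def by blast
  have a: "{(W (ln (pr c v)), fact (c, v)) | c v. c \<in> Pc \<and> v \<in> Dom c \<and> 0 < pr c v \<and> pr c v < 1}
     \<subseteq> (\<lambda>(c, v). (W (ln (pr c v)), fact (c, v))) ` ?S"
    using mv unfolding sig_atoms_def mv_prob_program_def by auto
  have b: "{(Alpha, fact (c, v)) | c v. c \<in> Pc \<and> v \<in> Dom c \<and> pr c v = 1} \<subseteq> (\<lambda>x. (Alpha, fact x)) ` ?S"
    using mv unfolding sig_atoms_def mv_prob_program_def by auto
  have c: "{(Alpha, constraint {(c, v)} Top) | c v. c \<in> Pc \<and> v \<in> Dom c \<and> pr c v = 0}
     \<subseteq> (\<lambda>x. (Alpha, constraint {x} Top)) ` ?S"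
    using mv unfolding sig_atoms_def mv_prob_program_def by auto
  have d: "{(Alpha, R) | R. R \<in> Pi} = Pair Alpha ` Pi" by auto
  have "uniq_constraints Cs Dom \<subseteq> (\<lambda>(x, y). constraint {x, y} Top) ` (?S \<times> ?S)"
    unfolding uniq_constraints_def sig_atoms_def by auto
  then have fu: "finite (uniq_constraints Cs Dom)" using fS finite_subset by blast
  have "exist_constraints Pc Dom = (\<lambda>c. constraint {} (Neg (disj_list (map (\<lambda>v. Atom (c, v)) (dom_list Dom c))))) ` Pc"
    unfolding exist_constraints_def by auto
  then have fe: "finite (exist_constraints Pc Dom)" using fPc by simp
  have e: "{(Alpha, R) | R. R \<in> uniq_constraints Cs Dom} = Pair Alpha ` uniq_constraints Cs Dom" by auto
  have g: "{(Alpha, R) | R. R \<in> exist_constraints Pc Dom} = Pair Alpha ` exist_constraints Pc Dom" by auto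
  have fPi: "finite Pi" using mv unfolding mv_prob_program_def by auto
  show ?thesis unfolding T_trans_def
    using finite_subset[OF a] finite_subset[OF b] finite_subset[OF c] fS fPi fu fe
    unfolding d e g by auto
qed

lemma SM_finite:
  assumes mv: "mv_prob_program Cs Pc Dom pr Pi"
  shows "finite (SM (T_trans Cs Pc Dom pr Pi))"
proof -
  have "SM (T_trans Cs Pc Dom pr Pi) \<subseteq> Pow (sig_atoms Cs Dom)" using SM_sub[OF mv] by blast
  then show ?thesis using sig_finite[OF mv] finite_subset by blast
qed


lemma pr1_in:
  assumes mv: "mv_prob_program Cs Pc Dom pr Pi" and pos: "\<forall>c\<in>Pc. \<forall>v\<in>Dom c. pr c v > 0"
    and c: "c \<in> Pc" and v: "v \<in> Dom c" and p1: "pr c v = 1" and cons: "consistent Cs Pc Dom I"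
  shows "(c, v) \<in> I"
proof -
  have fin: "finite (Dom c)" and sum1: "(\<Sum>v\<in>Dom c. pr c v) = 1"
    and nn: "\<forall>v\<in>Dom c. 0 \<le> pr c v"
    using mv c unfolding mv_prob_program_def by auto
  have dom: "Dom c = {v}"
  proof (rule ccontr)
    assume "Dom c \<noteq> {v}"
    then obtain v' where v': "v' \<in> Dom c" "v' \<noteq> v" using v by blast
    have "(\<Sum>v\<in>Dom c. pr c v) = pr c v + (\<Sum>u\<in>Dom c - {v}. pr c u)"
      using fin v by (simp add: sum.remove)
    moreover have "pr c v' \<le> (\<Sum>u\<in>Dom c - {v}. pr c u)"
      by (rule member_le_sum) (use v' fin nn in auto)
    moreover have "pr c v' > 0" using pos c v' by auto
    ultimately show False using sum1 p1 by linarith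
  qed
  have "constraint {} (Neg (disj_list (map (\<lambda>v. Atom (c, v)) (dom_list Dom c)))) \<in> exist_constraints Pc Dom"
    using c unfolding exist_constraints_def by auto
  then have "rsat I (constraint {} (Neg (disj_list (map (\<lambda>v. Atom (c, v)) (dom_list Dom c)))))"
    using cons unfolding consistent_def by blast
  then have "fsat I (disj_list (map (\<lambda>v. Atom (c, v)) (dom_list Dom c)))"
    by simp
  then obtain u where "u \<in> set (dom_list Dom c)" "(c, u) \<in> I" by (auto simp: fsat_disj_list)
  then show ?thesis using dom_list_set[of Dom c, OF fin] dom by auto
qed

lemma alpha_ok_iff:
  assumes mv: "mv_prob_program Cs Pc Dom pr Pi" and pos: "\<forall>c\<in>Pc. \<forall>v\<in>Dom c. pr c v > 0"
  shows "(\<forall>x\<in>T_trans Cs Pc Dom pr Pi. fst x = Alpha \<longrightarrow> rsat I (snd x)) \<longleftrightarrow>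
         consistent Cs Pc Dom I \<and> (\<forall>R\<in>Pi. rsat I R)"
proof
  assume a: "\<forall>x\<in>T_trans Cs Pc Dom pr Pi. fst x = Alpha \<longrightarrow> rsat I (snd x)"
  have "(Alpha, R) \<in> T_trans Cs Pc Dom pr Pi" if "R \<in> Pi \<union> uniq_constraints Cs Dom \<union> exist_constraints Pc Dom" for R
    using that unfolding T_trans_def by blast
  then show "consistent Cs Pc Dom I \<and> (\<forall>R\<in>Pi. rsat I R)"
    using a unfolding consistent_def by fastforce
next
  assume b: "consistent Cs Pc Dom I \<and> (\<forall>R\<in>Pi. rsat I R)"
  show "\<forall>x\<in>T_trans Cs Pc Dom pr Pi. fst x = Alpha \<longrightarrow> rsat I (snd x)"
  proof (clarify)
    fix w R assume wR: "(w, R) \<in> T_trans Cs Pc Dom pr Pi" and "fst (w, R) = Alpha"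
    then have w: "w = Alpha" by simp
    from wR show "rsat I (snd (w, R))"
    proof (cases rule: T_cases)
      case (f c v) then show ?thesis using pr1_in[OF mv pos] b w by auto
    next
      case (z c v)
      then have "pr c v > 0" using pos by blast
      then show ?thesis using z by simp
    next
      case p then show ?thesis using b by auto
    next
      case u then show ?thesis using b unfolding consistent_def by auto
    next
      case e then show ?thesis using b unfolding consistent_def by auto
    qed
  qed
qed

lemma S_eq:
  assumes mv: "mv_prob_program Cs Pc Dom pr Pi" and pos: "\<forall>c\<in>Pc. \<forall>v\<in>Dom c. pr c v > 0"
    and I: "I \<subseteq> sig_atoms Cs Dom" and cons: "consistent Cs Pc Dom I" and sat: "\<forall>R\<in>Pi. rsat I R"
  shows "snd ` sat_part (T_trans Cs Pc Dom pr Pi) I =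
     (Pi \<union> fact ` TC Pc I) \<union> (uniq_constraints Cs Dom \<union> exist_constraints Pc Dom)"
proof
  show "snd ` sat_part (T_trans Cs Pc Dom pr Pi) I \<subseteq> (Pi \<union> fact ` TC Pc I) \<union> (uniq_constraints Cs Dom \<union> exist_constraints Pc Dom)"
  proof
    fix R assume "R \<in> snd ` sat_part (T_trans Cs Pc Dom pr Pi) I"
    then obtain w where wR: "(w, R) \<in> T_trans Cs Pc Dom pr Pi" and r: "rsat I R"
      unfolding sat_part_def by auto
    from wR show "R \<in> (Pi \<union> fact ` TC Pc I) \<union> (uniq_constraints Cs Dom \<union> exist_constraints Pc Dom)"
    proof (cases rule: T_cases)
      case (f c v) then show ?thesis using r unfolding TC_def by auto
    next
      case (z c v)
      then have False using pos by fastforce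
      then show ?thesis ..
    qed auto
  qed
next
  show "(Pi \<union> fact ` TC Pc I) \<union> (uniq_constraints Cs Dom \<union> exist_constraints Pc Dom) \<subseteq> snd ` sat_part (T_trans Cs Pc Dom pr Pi) I"
  proof
    fix R assume R: "R \<in> (Pi \<union> fact ` TC Pc I) \<union> (uniq_constraints Cs Dom \<union> exist_constraints Pc Dom)"
    have "\<exists>w. (w, R) \<in> T_trans Cs Pc Dom pr Pi \<and> rsat I R"
    proof (cases "R \<in> fact ` TC Pc I")
      case True
      then obtain c v where cv: "(c, v) \<in> I" "c \<in> Pc" "R = fact (c, v)" unfolding TC_def by auto
      then have v: "v \<in> Dom c" using I unfolding sig_atoms_def by auto
      have "pr c v > 0" "pr c v \<le> 1" using pos mv cv(2) v unfolding mv_prob_program_def by auto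
      then have "pr c v < 1 \<or> pr c v = 1" by auto
      then show ?thesis
      proof
        assume "pr c v < 1"
        then have "(W (ln (pr c v)), R) \<in> T_trans Cs Pc Dom pr Pi"
          using cv v \<open>pr c v > 0\<close> unfolding T_trans_def by blast
        then show ?thesis using cv by auto
      next
        assume "pr c v = 1"
        then have "(Alpha, R) \<in> T_trans Cs Pc Dom pr Pi"
          using cv v unfolding T_trans_def by blast
        then show ?thesis using cv by auto
      qed
    next
      case False
      then have "R \<in> Pi \<union> uniq_constraints Cs Dom \<union> exist_constraints Pc Dom" using R by blast
      then have "(Alpha, R) \<in> T_trans Cs Pc Dom pr Pi" unfolding T_trans_def by blast
      moreover have "rsat I R" using False R sat cons unfolding consistent_def by blast
      ultimately show ?thesis by blast
    qed
    then show "R \<in> snd ` sat_part (T_trans Cs Pc Dom pr Pi) I"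
      unfolding sat_part_def by force
  qed
qed

lemma key:
  assumes mv: "mv_prob_program Cs Pc Dom pr Pi" and pos: "\<forall>c\<in>Pc. \<forall>v\<in>Dom c. pr c v > 0"
    and I: "I \<subseteq> sig_atoms Cs Dom" and cons: "consistent Cs Pc Dom I" and sat: "\<forall>R\<in>Pi. rsat I R"
  shows "I \<in> SM (T_trans Cs Pc Dom pr Pi) \<longleftrightarrow> stable_model (Pi \<union> fact ` TC Pc I) I"
proof -
  have C: "\<forall>(A, B)\<in>reduct (uniq_constraints Cs Dom \<union> exist_constraints Pc Dom) I. A = {} \<and> \<not> B \<subseteq> I"
  proof (clarify)
    fix A B assume "(A, B) \<in> reduct (uniq_constraints Cs Dom \<union> exist_constraints Pc Dom) I"
    then obtain R where R: "R \<in> uniq_constraints Cs Dom \<union> exist_constraints Pc Dom" "fsat I (nbody R)"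
      "A = head R" "B = pbody R" unfolding reduct_def by auto
    have h: "head R = {}" using constr_head[OF R(1)] .
    have "rsat I R" using cons R(1) unfolding consistent_def by blast
    then show "A = {} \<and> \<not> B \<subseteq> I" using R h unfolding rsat_def by auto
  qed
  show ?thesis
    unfolding SM_def mem_Collect_eq stable_model_def S_eq[OF assms]
      reduct_Un[of "Pi \<union> fact ` TC Pc I" "uniq_constraints Cs Dom \<union> exist_constraints Pc Dom"]
    by (rule minimal_model_Un_constr[OF C])
qed


lemma pmodel_D: "pmodel Q J \<Longrightarrow> (A, B) \<in> Q \<Longrightarrow> B \<subseteq> J \<Longrightarrow> A \<inter> J \<noteq> {}"
  unfolding pmodel_def by blast

lemma reduct_facts: fixes S :: "'a set" shows "reduct (fact ` S) I = (\<lambda>a. ({a}, {})) ` S"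
proof
  show "reduct (fact ` S) I \<subseteq> (\<lambda>a. ({a}, {}::'a set)) ` S" unfolding reduct_def fact_def by auto
next
  show "(\<lambda>a. ({a}, {}::'a set)) ` S \<subseteq> reduct (fact ` S) I"
  proof
    fix x assume "x \<in> (\<lambda>a. ({a}, {}::'a set)) ` S"
    then obtain a where a: "a \<in> S" "x = ({a}, {})" by auto
    have "fact a \<in> fact ` S" using a by auto
    then show "x \<in> reduct (fact ` S) I" unfolding reduct_def using a by (force simp: fact_def)
  qed
qed

lemma restrict:
  assumes mv: "mv_prob_program Cs Pc Dom pr Pi" and J0: "J0 \<in> SM2 Cs Pc Dom Pi"
  shows "J0 \<inter> sig_atoms Cs Dom \<in> SM2 Cs Pc Dom Pi"
proof -
  define X where "X = sig_atoms Cs Dom"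
  define J1 where "J1 = J0 \<inter> X"
  have PiX: "\<forall>R\<in>Pi. rule_atoms R \<subseteq> X" using mv unfolding mv_prob_program_def X_def by auto
  have cons0: "consistent Cs Pc Dom J0" and st0: "stable_model (Pi \<union> fact ` TC Pc J0) J0"
    using J0 unfolding SM2_def by auto
  have cons1: "consistent Cs Pc Dom J1"
    unfolding consistent_def
  proof
    fix R assume R: "R \<in> uniq_constraints Cs Dom \<union> exist_constraints Pc Dom"
    have "rsat J1 R = rsat J0 R" unfolding J1_def X_def by (rule rsat_restrict[OF constr_atoms[OF mv R]])
    then show "rsat J1 R" using cons0 R unfolding consistent_def by blast
  qed
  have redPi: "reduct Pi J1 = reduct Pi J0"
  proof -
    have "fsat J1 (nbody R) = fsat J0 (nbody R)" if "R \<in> Pi" for R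
      unfolding J1_def by (rule fsat_restrict) (use PiX that in \<open>auto simp: rule_atoms_def\<close>)
    then show ?thesis unfolding reduct_def by blast
  qed
  have TC1: "TC Pc J1 = TC Pc J0 \<inter> X" unfolding TC_def J1_def by auto
  define Q0 where "Q0 = reduct Pi J0 \<union> (\<lambda>a. ({a}, {})) ` TC Pc J0"
  define Q1 where "Q1 = reduct Pi J0 \<union> (\<lambda>a. ({a}, {})) ` TC Pc J1"
  have m0: "minimal_model Q0 J0" using st0 unfolding stable_model_def Q0_def reduct_Un reduct_facts .
  have redPiX: "A \<subseteq> X \<and> B \<subseteq> X" if "(A, B) \<in> reduct Pi J0" for A B
    using that PiX unfolding reduct_def rule_atoms_def by auto
  have pm1: "pmodel Q1 J1"
    unfolding pmodel_def
  proof (intro ballI, clarify)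
    fix A B assume AB: "(A, B) \<in> Q1" "B \<subseteq> J1" "A \<inter> J1 = {}"
    show False
    proof (cases "(A, B) \<in> reduct Pi J0")
      case True
      have "pmodel Q0 J0" using m0 unfolding minimal_model_def by blast
      moreover have "(A, B) \<in> Q0" using True unfolding Q0_def by blast
      moreover have "B \<subseteq> J0" using AB(2) unfolding J1_def by blast
      ultimately have "A \<inter> J0 \<noteq> {}" by (rule pmodel_D)
      then show False using AB(3) redPiX[OF True] unfolding J1_def by blast
    next
      case False
      then obtain a where "a \<in> TC Pc J1" "A = {a}" using AB(1) unfolding Q1_def by auto
      then show False using AB(3) unfolding TC_def by auto
    qed
  qed
  have min1: "\<not> pmodel Q1 J" if J: "J \<subset> J1" for J
  proof
    assume pJ: "pmodel Q1 J"
    define J' where "J' = J \<union> (J0 - X)"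
    have "J' \<subset> J0" using J unfolding J'_def J1_def by blast
    moreover have "pmodel Q0 J'"
      unfolding pmodel_def
    proof (intro ballI, clarify)
      fix A B assume AB: "(A, B) \<in> Q0" "B \<subseteq> J'" "A \<inter> J' = {}"
      show False
      proof (cases "(A, B) \<in> reduct Pi J0")
        case True
        then have "B \<subseteq> J" using AB(2) redPiX[OF True] unfolding J'_def by blast
        moreover have "(A, B) \<in> Q1" using True unfolding Q1_def by blast
        ultimately have "A \<inter> J \<noteq> {}" using pJ pmodel_D by blast
        then show False using AB(3) unfolding J'_def by blast
      next
        case False
        then obtain a where a: "a \<in> TC Pc J0" "A = {a}" using AB(1) unfolding Q0_def by auto
        show False
        proof (cases "a \<in> X")
          case True
          then have "({a}, {}) \<in> Q1" using a TC1 unfolding Q1_def by auto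
          then have "{a} \<inter> J \<noteq> {}" using pJ pmodel_D by blast
          then have "a \<in> J" by blast
          then show False using AB(3) a unfolding J'_def by blast
        next
          case False
          then have "a \<in> J0 - X" using a unfolding TC_def by auto
          then show False using AB(3) a unfolding J'_def by blast
        qed
      qed
    qed
    ultimately show False using m0 unfolding minimal_model_def by blast
  qed
  have "stable_model (Pi \<union> fact ` TC Pc J1) J1"
    unfolding stable_model_def reduct_Un reduct_facts redPi minimal_model_def
    using pm1 min1 unfolding Q1_def by blast
  then show ?thesis using cons1 unfolding SM2_def J1_def X_def by blast
qed

lemma alpha_sum:
  assumes fin: "finite P"
  shows "kf P I \<le> (\<Sum>x\<in>P. if fst x = Alpha then 1 else 0)
    \<and> (kf P I = (\<Sum>x\<in>P. if fst x = Alpha then 1 else 0) \<longleftrightarrow> (\<forall>x\<in>P. fst x = Alpha \<longrightarrow> rsat I (snd x)))"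
proof -
  define g :: "weight \<times> 'a rule \<Rightarrow> real" where "g x = (if fst x = Alpha then 1 else 0)" for x
  have sp: "sat_part P I = {x\<in>P. rsat I (snd x)}" unfolding sat_part_def by auto
  have sub: "sat_part P I \<subseteq> P" unfolding sp by auto
  have eq: "(\<Sum>x\<in>P. g x) = (\<Sum>x\<in>P - sat_part P I. g x) + kf P I"
    unfolding kf_def g_def[symmetric] by (rule sum.subset_diff[OF sub fin])
  have nn: "\<forall>x\<in>P - sat_part P I. g x \<ge> 0" unfolding g_def by auto
  have "(\<Sum>x\<in>P - sat_part P I. g x) \<ge> 0" by (rule sum_nonneg) (use nn in auto)
  moreover have "(\<Sum>x\<in>P - sat_part P I. g x) = 0 \<longleftrightarrow> (\<forall>x\<in>P - sat_part P I. g x = 0)"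
    using sum_nonneg_eq_0_iff[of "P - sat_part P I" g] nn fin by auto
  moreover have "(\<forall>x\<in>P - sat_part P I. g x = 0) \<longleftrightarrow> (\<forall>x\<in>P. fst x = Alpha \<longrightarrow> rsat I (snd x))"
    unfolding sp g_def by auto
  ultimately show ?thesis using eq unfolding g_def by linarith
qed


theorem lemma8:
  fixes Cs Pc :: "'c set" and Dom :: "'c \<Rightarrow> 'v set" and pr :: "'c \<Rightarrow> 'v \<Rightarrow> real"
    and Pi :: "('c \<times> 'v) rule set"
  assumes "mv_prob_program Cs Pc Dom pr Pi"
    and "SM2 Cs Pc Dom Pi \<noteq> {}"
    and "\<forall>c \<in> Pc. \<forall>v \<in> Dom c. pr c v > 0"
  shows "\<forall>I. I \<subseteq> sig_atoms Cs Dom \<longrightarrow>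
           (prob_stable_model (T_trans Cs Pc Dom pr Pi) I \<longleftrightarrow> I \<in> SM2 Cs Pc Dom Pi)"
proof -
  note mv = assms(1) and pos = assms(3)
  define T where "T = T_trans Cs Pc Dom pr Pi"
  define K where "K = (\<Sum>x\<in>T. if fst x = Alpha then 1 else (0::real))"
  have finT: "finite T" unfolding T_def using T_finite[OF mv] .
  have ks: "kf T J \<le> K \<and> (kf T J = K \<longleftrightarrow> (\<forall>x\<in>T. fst x = Alpha \<longrightarrow> rsat J (snd x)))" for J
    unfolding K_def using alpha_sum[OF finT] .
  have sm2: "I \<in> SM T \<and> kf T I = K \<longleftrightarrow> I \<in> SM2 Cs Pc Dom Pi" if I: "I \<subseteq> sig_atoms Cs Dom" for I
  proof
    assume a: "I \<in> SM T \<and> kf T I = K"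
    then have "consistent Cs Pc Dom I \<and> (\<forall>R\<in>Pi. rsat I R)"
      using ks[of I] alpha_ok_iff[OF mv pos] unfolding T_def by blast
    then show "I \<in> SM2 Cs Pc Dom Pi"
      using a key[OF mv pos I] unfolding T_def SM2_def by blast
  next
    assume b: "I \<in> SM2 Cs Pc Dom Pi"
    then have c: "consistent Cs Pc Dom I" "stable_model (Pi \<union> fact ` TC Pc I) I" unfolding SM2_def by auto
    then have s: "\<forall>R\<in>Pi. rsat I R" using stable_rsat by blast
    have "I \<in> SM T" using key[OF mv pos I c(1) s] c(2) unfolding T_def by blast
    moreover have "kf T I = K" using ks[of I] alpha_ok_iff[OF mv pos] c(1) s unfolding T_def by blast
    ultimately show "I \<in> SM T \<and> kf T I = K" by blast
  qed
  obtain J0 where "J0 \<in> SM2 Cs Pc Dom Pi" using assms(2) by blast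
  then have J1: "J0 \<inter> sig_atoms Cs Dom \<in> SM2 Cs Pc Dom Pi" by (rule restrict[OF mv])
  then have J1': "J0 \<inter> sig_atoms Cs Dom \<in> SM T \<and> kf T (J0 \<inter> sig_atoms Cs Dom) = K"
    using sm2[of "J0 \<inter> sig_atoms Cs Dom"] by blast
  have pc: "Prob T I \<noteq> 0 \<longleftrightarrow> I \<in> SM T \<and> kf T I = K" for I
    by (rule Prob_char) (use SM_finite[OF mv] J1' ks in \<open>auto simp: T_def\<close>)
  show ?thesis
    using pc sm2 unfolding prob_stable_model_def T_def by blast
qed

end
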